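(* Let $S$ be a star-shaped subset of a topological real vector space $V$ and $p_S$ its gauge function. Then: (1a) $\mathrm{int}\big(p_S^{-1}([0,1))\big)=\mathrm{int}(S)=\mathrm{int}\big(p_S^{-1}([0,1])\big)$; (1b) $\overline{p_S^{-1}([0,1))}=\overline{S}=\overline{p_S^{-1}([0,1])}$; (2a) $p_S$ is lower semi-continuous $\iff$ $p_S^{-1}([0,1])$ is closed in $V$ $\iff$ $p_S^{-1}([0,1])=\overline{S}$; (2b) $p_S$ is upper semi-continuous $\iff$ $p_S^{-1}([0,1))$ is open in $V$ $\iff$ $p_S^{-1}([0,1))=\mathrm{int}(S)$; (2c) $p_S$ is continuous $\iff$ $p_S^{-1}(1)=\partial S$. Here interior, closure and boundary are taken in $V$, and semi-continuity/continuity refer to $p_S$ as a map into $[0,+\infty]$ with its usual order topology.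
   Context: Topological real vector spaces are not assumed Hausdorff. A subset $S$ is star-shaped (about the origin) if $tx\in S$ for all $x\in S$, $t\in[0,1]$. The gauge of $S$ is $p_S:V\to[0,+\infty]$, $p_S(x)=\inf\{\lambda\ge 0: x\in\lambda S\}$ (with $\inf\emptyset=+\infty$). *)

theory Defs
  imports "HOL-Analysis.Analysis" "HOL-Library.Extended_Nonnegative_Real"
begin

definition star_shaped0 :: "'a::real_vector set \<Rightarrow> bool" where
  "star_shaped0 S \<longleftrightarrow> (\<forall>x\<in>S. \<forall>t::real. 0 \<le> t \<and> t \<le> 1 \<longrightarrow> t *\<^sub>R x \<in> S)"

text \<open>Gauge (Minkowski functional) with values in [0,+infinity]; Inf of the empty set is top.\<close>
definition gauge_fun :: "'a::real_vector set \<Rightarrow> 'a \<Rightarrow> ennreal" where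
  "gauge_fun S x = Inf {ennreal t | t. 0 \<le> t \<and> x \<in> (\<lambda>y. t *\<^sub>R y) ` S}"

definition lower_semicont :: "('a::topological_space \<Rightarrow> ennreal) \<Rightarrow> bool" where
  "lower_semicont f \<longleftrightarrow> (\<forall>c. open {x. c < f x})"

definition upper_semicont :: "('a::topological_space \<Rightarrow> ennreal) \<Rightarrow> bool" where
  "upper_semicont f \<longleftrightarrow> (\<forall>c. open {x. f x < c})"

end

theory Submission
  imports Defs
begin

lemma ennreal_mult_Inf:
  assumes "c > 0"
  shows "ennreal c * Inf A = Inf ((\<lambda>a. ennreal c * a) ` A)"
proof (rule antisym)
  show "ennreal c * Inf A \<le> Inf ((\<lambda>a. ennreal c * a) ` A)"
    by (auto intro!: Inf_greatest mult_left_mono Inf_lower)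
  have inv: "ennreal (1/c) * (ennreal c * a) = a" for a
    using assms by (simp add: mult.assoc[symmetric] ennreal_mult[symmetric])
  have "ennreal (1/c) * Inf ((\<lambda>a. ennreal c * a) ` A) \<le> Inf A"
  proof (rule Inf_greatest)
    fix a assume "a \<in> A"
    then have "ennreal (1/c) * Inf ((\<lambda>a. ennreal c * a) ` A) \<le> ennreal (1/c) * (ennreal c * a)"
      by (auto intro!: mult_left_mono Inf_lower)
    then show "ennreal (1/c) * Inf ((\<lambda>a. ennreal c * a) ` A) \<le> a" using inv by simp
  qed
  then have "ennreal c * (ennreal (1/c) * Inf ((\<lambda>a. ennreal c * a) ` A)) \<le> ennreal c * Inf A"
    by (rule mult_left_mono) simp
  moreover have "ennreal c * (ennreal (1/c) * b) = b" for b
    using assms by (simp add: mult.assoc[symmetric] ennreal_mult[symmetric])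
  ultimately show "Inf ((\<lambda>a. ennreal c * a) ` A) \<le> ennreal c * Inf A" by simp
qed

definition GS :: "'a::real_vector set \<Rightarrow> 'a \<Rightarrow> real set" where
  "GS S x = {t. 0 \<le> t \<and> x \<in> (\<lambda>y. t *\<^sub>R y) ` S}"

lemma gauge_GS: "gauge_fun S x = Inf (ennreal ` GS S x)"
  unfolding gauge_fun_def GS_def by (rule arg_cong[where f=Inf]) auto

lemma GS_scale:
  assumes "c > 0"
  shows "GS S (c *\<^sub>R x) = (\<lambda>u. c * u) ` GS S x"
proof
  show "GS S (c *\<^sub>R x) \<subseteq> (\<lambda>u. c * u) ` GS S x"
  proof
    fix t assume "t \<in> GS S (c *\<^sub>R x)"
    then obtain y where y: "0 \<le> t" "y \<in> S" "c *\<^sub>R x = t *\<^sub>R y" unfolding GS_def by auto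
    then have "x = (t/c) *\<^sub>R y" using assms
      by (metis (no_types, lifting) divide_inverse_commute scaleR_scaleR inverse_eq_divide
          less_irrefl scaleR_one right_inverse)
    then have "t/c \<in> GS S x" using y assms unfolding GS_def by auto
    moreover have "t = c * (t/c)" using assms by simp
    ultimately show "t \<in> (\<lambda>u. c * u) ` GS S x" by blast
  qed
  show "(\<lambda>u. c * u) ` GS S x \<subseteq> GS S (c *\<^sub>R x)"
    using assms unfolding GS_def by force
qed

lemma gauge_scale:
  assumes "c > 0"
  shows "gauge_fun S (c *\<^sub>R x) = ennreal c * gauge_fun S x"
proof -
  have "ennreal ` GS S (c *\<^sub>R x) = (\<lambda>a. ennreal c * a) ` (ennreal ` GS S x)"
    unfolding GS_scale[OF assms] image_image using assms
    by (intro image_cong) (auto simp: GS_def ennreal_mult)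
  then show ?thesis unfolding gauge_GS using ennreal_mult_Inf[OF assms] by simp
qed

lemma gauge_lt1:
  assumes star: "star_shaped0 S" and "gauge_fun S x < 1" shows "x \<in> S"
proof -
  from assms(2) obtain a where "a \<in> ennreal ` GS S x" "a < 1"
    unfolding gauge_GS Inf_less_iff by blast
  then obtain t y where t: "0 \<le> t" "y \<in> S" "x = t *\<^sub>R y" "ennreal t < 1"
    unfolding GS_def by auto
  then have "t \<le> 1" by (simp add: ennreal_less_iff)
  then show ?thesis using star t unfolding star_shaped0_def by auto
qed

lemma gauge_S: "x \<in> S \<Longrightarrow> gauge_fun S x \<le> 1"
  unfolding gauge_GS GS_def by (rule Inf_lower) (auto intro!: image_eqI[where x=1])


lemma ennreal_inv_le1: assumes "r > 0" shows "ennreal (1/r) * a \<le> 1 \<longleftrightarrow> a \<le> ennreal r"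
proof -
  have e1: "ennreal r * (ennreal (1/r) * b) = b" for b
    using assms by (simp add: mult.assoc[symmetric] ennreal_mult[symmetric])
  have e2: "ennreal (1/r) * (ennreal r * b) = b" for b
    using assms by (simp add: mult.assoc[symmetric] ennreal_mult[symmetric])
  show ?thesis
  proof
    assume "ennreal (1/r) * a \<le> 1"
    then have "ennreal r * (ennreal (1/r) * a) \<le> ennreal r * 1" by (rule mult_left_mono) simp
    then show "a \<le> ennreal r" using e1 by simp
  next
    assume "a \<le> ennreal r"
    then have "ennreal (1/r) * a \<le> ennreal (1/r) * ennreal r" by (rule mult_left_mono) simp
    then show "ennreal (1/r) * a \<le> 1" using e2[of 1] by simp
  qed
qed

lemma ennreal_inv_lt1: assumes "r > 0" shows "ennreal (1/r) * a < 1 \<longleftrightarrow> a < ennreal r"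
proof -
  have "ennreal (1/r) * a \<ge> 1 \<longleftrightarrow> a \<ge> ennreal r"
  proof -
    have e1: "ennreal r * (ennreal (1/r) * b) = b" for b
      using assms by (simp add: mult.assoc[symmetric] ennreal_mult[symmetric])
    have e2: "ennreal (1/r) * (ennreal r * b) = b" for b
      using assms by (simp add: mult.assoc[symmetric] ennreal_mult[symmetric])
    show ?thesis
    proof
      assume "ennreal (1/r) * a \<ge> 1"
      then have "ennreal r * (ennreal (1/r) * a) \<ge> ennreal r * 1" by (rule mult_left_mono) simp
      then show "a \<ge> ennreal r" using e1 by simp
    next
      assume "a \<ge> ennreal r"
      then have "ennreal (1/r) * a \<ge> ennreal (1/r) * ennreal r" by (rule mult_left_mono) simp
      then show "ennreal (1/r) * a \<ge> 1" using e2[of 1] by simp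
    qed
  qed
  then show ?thesis by (simp add: not_le[symmetric])
qed

lemma scale_const_cont:
  assumes scale_cont: "continuous_on UNIV (\<lambda>p::real \<times> 'a::{real_vector,topological_space}. fst p *\<^sub>R snd p)"
  shows "continuous_on UNIV (\<lambda>y::'a. c *\<^sub>R y)" "continuous_on UNIV (\<lambda>t::real. t *\<^sub>R (x::'a))"
proof -
  have "continuous_on UNIV ((\<lambda>p::real \<times> 'a. fst p *\<^sub>R snd p) \<circ> (\<lambda>y. (c, y)))"
    by (rule continuous_on_compose) (auto intro!: continuous_intros continuous_on_subset[OF scale_cont])
  then show "continuous_on UNIV (\<lambda>y::'a. c *\<^sub>R y)" by (simp add: o_def)
  have "continuous_on UNIV ((\<lambda>p::real \<times> 'a. fst p *\<^sub>R snd p) \<circ> (\<lambda>t. (t, x)))"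
    by (rule continuous_on_compose) (auto intro!: continuous_intros continuous_on_subset[OF scale_cont])
  then show "continuous_on UNIV (\<lambda>t::real. t *\<^sub>R (x::'a))" by (simp add: o_def)
qed

lemma open_vimage_UNIV: "continuous_on UNIV f \<Longrightarrow> open B \<Longrightarrow> open (f -` B)"
  using continuous_on_open_vimage[of UNIV f] by auto

lemma closed_vimage_UNIV: "continuous_on UNIV f \<Longrightarrow> closed B \<Longrightarrow> closed (f -` B)"
  using continuous_on_closed_vimage[of UNIV f] by auto


theorem mainTheorem14:
  fixes S :: "'a::{real_vector, topological_space} set"
  assumes add_cont: "continuous_on UNIV (\<lambda>p::'a \<times> 'a. fst p + snd p)"
    and scale_cont: "continuous_on UNIV (\<lambda>p::real \<times> 'a. fst p *\<^sub>R snd p)"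
    and star: "star_shaped0 S"
  shows "(interior {x. gauge_fun S x < 1} = interior S
       \<and> interior S = interior {x. gauge_fun S x \<le> 1})
    \<and> (closure {x. gauge_fun S x < 1} = closure S
       \<and> closure S = closure {x. gauge_fun S x \<le> 1})
    \<and> ((lower_semicont (gauge_fun S) \<longleftrightarrow> closed {x. gauge_fun S x \<le> 1})
       \<and> (closed {x. gauge_fun S x \<le> 1} \<longleftrightarrow> {x. gauge_fun S x \<le> 1} = closure S))
    \<and> ((upper_semicont (gauge_fun S) \<longleftrightarrow> open {x. gauge_fun S x < 1})
       \<and> (open {x. gauge_fun S x < 1} \<longleftrightarrow> {x. gauge_fun S x < 1} = interior S))
    \<and> (continuous_on UNIV (gauge_fun S) \<longleftrightarrow> {x. gauge_fun S x = 1} = frontier S)"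
proof -
  define p where "p = gauge_fun S"
  define L where "L = {x. p x < 1}"
  define M where "M = {x. p x \<le> 1}"
  have LS: "L \<subseteq> S" using gauge_lt1[OF star] unfolding L_def p_def by auto
  have SM: "S \<subseteq> M" using gauge_S unfolding M_def p_def by auto
  note sc = scale_const_cont[OF scale_cont]
  have pscale: "p (c *\<^sub>R x) = ennreal c * p x" if "c > 0" for c x
    unfolding p_def using gauge_scale[OF that] .
  have intM: "interior M \<subseteq> interior L"
  proof
    fix x assume x: "x \<in> interior M"
    define U where "U = interior M"
    have "open ((\<lambda>t. t *\<^sub>R x) -` U)" unfolding U_def
      by (rule open_vimage_UNIV[OF sc(2)]) simp
    moreover have "1 \<in> (\<lambda>t. t *\<^sub>R x) -` U" using x U_def by simp
    ultimately obtain e where e: "e > 0" "ball 1 e \<subseteq> (\<lambda>t. t *\<^sub>R x) -` U"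
      by (meson open_contains_ball)
    define c where "c = 1 + e/2"
    have c: "c > 1" using e c_def by simp
    have "dist 1 c < e" using e c_def by (simp add: dist_real_def)
    then have cx: "c *\<^sub>R x \<in> U" using e by auto
    define W where "W = (\<lambda>y. c *\<^sub>R y) -` U"
    have oW: "open W" unfolding W_def U_def by (rule open_vimage_UNIV[OF sc(1)]) simp
    have "W \<subseteq> L"
    proof
      fix y assume "y \<in> W"
      then have "p (c *\<^sub>R y) \<le> 1" unfolding W_def U_def M_def using interior_subset by blast
      then have "ennreal (1/c) * p (c *\<^sub>R y) \<le> ennreal (1/c)"
        using mult_left_mono[of "p (c *\<^sub>R y)" 1 "ennreal (1/c)"] by simp
      moreover have "ennreal (1/c) * p (c *\<^sub>R y) = p y"
        using c pscale[of c y] by (simp add: mult.assoc[symmetric] ennreal_mult[symmetric])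
      moreover have "ennreal (1/c) < 1" using c by (simp add: ennreal_less_iff)
      ultimately have "p y < 1" by (metis le_less_trans)
      then show "y \<in> L" unfolding L_def by simp
    qed
    moreover have "x \<in> W" using cx W_def by simp
    ultimately show "x \<in> interior L" using oW interior_maximal by blast
  qed
  have intLS: "interior L = interior S" using intM interior_mono[OF LS] interior_mono[OF SM] by blast
  have intSM: "interior S = interior M" using intM interior_mono[OF LS] interior_mono[OF SM] by blast
  have MclL: "M \<subseteq> closure L"
  proof
    fix x assume x: "x \<in> M"
    show "x \<in> closure L" unfolding closure_iff_nhds_not_empty
    proof (intro allI impI)
      fix A T assume T: "T \<subseteq> A" "open T" "x \<in> T"
      have "open ((\<lambda>t. t *\<^sub>R x) -` T)" by (rule open_vimage_UNIV[OF sc(2) T(2)])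
      moreover have "1 \<in> (\<lambda>t. t *\<^sub>R x) -` T" using T by simp
      ultimately obtain e where e: "e > 0" "ball 1 e \<subseteq> (\<lambda>t. t *\<^sub>R x) -` T"
        by (meson open_contains_ball)
      define t where "t = 1 - min (e/2) (1/2)"
      have t: "0 < t" "t < 1" using e t_def by auto
      have "dist 1 t < e" using e t_def by (simp add: dist_real_def)
      then have tx: "t *\<^sub>R x \<in> T" using e by auto
      have "p (t *\<^sub>R x) = ennreal t * p x" using pscale t by simp
      also have "\<dots> \<le> ennreal t" using x mult_left_mono[of "p x" 1 "ennreal t"] unfolding M_def by simp
      also have "\<dots> < 1" using t by (simp add: ennreal_less_iff)
      finally have "t *\<^sub>R x \<in> L" unfolding L_def by simp
      then show "L \<inter> A \<noteq> {}" using tx T by blast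
    qed
  qed
  have clML: "closure M \<subseteq> closure L"
    using closure_mono[OF MclL] by simp
  have clLS: "closure L = closure S" using clML closure_mono[OF LS] closure_mono[OF SM]
    by blast
  have clSM: "closure S = closure M" using clML closure_mono[OF LS] closure_mono[OF SM]
    by blast
  have Mr: "{x. p x \<le> ennreal r} = (\<lambda>y. (1/r) *\<^sub>R y) -` M" if "r > 0" for r
    using that pscale[of "1/r"] ennreal_inv_le1[OF that] unfolding M_def by auto
  have Lr: "{x. p x < ennreal r} = (\<lambda>y. (1/r) *\<^sub>R y) -` L" if "r > 0" for r
    using that pscale[of "1/r"] ennreal_inv_lt1[OF that] unfolding L_def by auto
  have lsc1: "lower_semicont p \<longleftrightarrow> closed M"
  proof
    assume "lower_semicont p"
    then have "open {x. 1 < p x}" unfolding lower_semicont_def by blast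
    moreover have "M = - {x. 1 < p x}" unfolding M_def by auto
    ultimately show "closed M" by (simp add: closed_def)
  next
    assume cM: "closed M"
    show "lower_semicont p" unfolding lower_semicont_def
    proof
      fix c :: ennreal
      have "closed {x. p x \<le> c}"
      proof (cases "c = top")
        case True then show ?thesis by simp
      next
        case False
        have eq: "{x. p x \<le> c} = (\<Inter>r\<in>{r. r > 0 \<and> c < ennreal r}. {x. p x \<le> ennreal r})"
        proof (safe)
          fix x r assume "p x \<le> c" "c < ennreal r" then show "p x \<le> ennreal r" by simp
        next
          fix x assume H: "x \<in> (\<Inter>r\<in>{r. r > 0 \<and> c < ennreal r}. {x. p x \<le> ennreal r})"
          show "p x \<le> c"
          proof (rule ccontr)
            assume "\<not> p x \<le> c"
            then have "c < p x" by simp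
            then obtain d where d: "c < d" "d < p x" using dense by blast
            have "d < top" using d(2) top_greatest by (rule less_le_trans)
            then obtain r where r: "d = ennreal r" "r \<ge> 0" by (cases d) auto
            have "r > 0" using r d by (metis ennreal_eq_0_iff not_gr_zero not_less_zero order.not_eq_order_implies_strict)
            then have "p x \<le> d" using H d r by auto
            then show False using d by simp
          qed
        qed
        show ?thesis unfolding eq
          by (intro closed_INT ballI) (auto simp: Mr intro!: closed_vimage_UNIV[OF sc(1) cM])
      qed
      moreover have "{x. c < p x} = - {x. p x \<le> c}" by auto
      ultimately show "open {x. c < p x}" by (simp add: closed_def)
    qed
  qed
  have lsc2: "closed M \<longleftrightarrow> M = closure S"
  proof
    assume cM: "closed M"
    have "closure S \<subseteq> M" using closure_mono[OF SM] closure_closed[OF cM] by simp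
    moreover have "M \<subseteq> closure S" using MclL clLS by simp
    ultimately show "M = closure S" by blast
  qed simp
  have usc1: "upper_semicont p \<longleftrightarrow> open L"
  proof
    assume "upper_semicont p"
    then show "open L" unfolding upper_semicont_def L_def by blast
  next
    assume oL: "open L"
    show "upper_semicont p" unfolding upper_semicont_def
    proof
      fix c :: ennreal
      have eq: "{x. p x < c} = (\<Union>r\<in>{r. r > 0 \<and> ennreal r \<le> c}. {x. p x < ennreal r})"
      proof (safe)
        fix x assume "p x < c"
        then obtain d where d: "p x < d" "d < c" using dense by blast
        have "d < top" using d(2) top_greatest by (rule less_le_trans)
        then obtain r where r: "d = ennreal r" "r \<ge> 0" by (cases d) auto
        have "r > 0" using r d by (metis ennreal_eq_0_iff not_gr_zero not_less_zero order.not_eq_order_implies_strict)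
        then show "x \<in> (\<Union>r\<in>{r. r > 0 \<and> ennreal r \<le> c}. {x. p x < ennreal r})"
          using d r by auto
      next
        fix x r assume "p x < ennreal r" "ennreal r \<le> c" then show "p x < c" by simp
      qed
      show "open {x. p x < c}" unfolding eq
        by (intro open_UN ballI) (auto simp: Lr intro!: open_vimage_UNIV[OF sc(1) oL])
    qed
  qed
  have usc2: "open L \<longleftrightarrow> L = interior S"
  proof
    assume "open L" then show "L = interior S" using intLS interior_open by metis
  qed simp
  have cont_iff: "continuous_on UNIV p \<longleftrightarrow> lower_semicont p \<and> upper_semicont p"
  proof
    assume c: "continuous_on UNIV p"
    show "lower_semicont p \<and> upper_semicont p"
      unfolding lower_semicont_def upper_semicont_def
      using open_vimage_UNIV[OF c, of "{_<..}"] open_vimage_UNIV[OF c, of "{..<_}"]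
      by (auto simp: vimage_def)
  next
    assume H: "lower_semicont p \<and> upper_semicont p"
    show "continuous_on UNIV p" unfolding continuous_on_def
    proof
      fix x :: 'a
      show "(p \<longlongrightarrow> p x) (at x within UNIV)" unfolding order_tendsto_iff
      proof (intro conjI allI impI)
        fix l assume "l < p x"
        moreover have "open {y. l < p y}" using H unfolding lower_semicont_def by blast
        ultimately show "\<forall>\<^sub>F y in at x within UNIV. l < p y"
          unfolding eventually_at_topological by blast
      next
        fix u assume "p x < u"
        moreover have "open {y. p y < u}" using H unfolding upper_semicont_def by blast
        ultimately show "\<forall>\<^sub>F y in at x within UNIV. p y < u"
          unfolding eventually_at_topological by blast
      qed
    qed
  qed
  have c2: "continuous_on UNIV p \<longleftrightarrow> {x. p x = 1} = frontier S"
  proof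
    assume "continuous_on UNIV p"
    then have "M = closure S" "L = interior S" using cont_iff lsc1 lsc2 usc1 usc2 by auto
    moreover have "{x. p x = 1} = M - L" unfolding M_def L_def by auto
    ultimately show "{x. p x = 1} = frontier S" by (simp add: frontier_def)
  next
    assume F: "{x. p x = 1} = frontier S"
    have "L \<subseteq> interior S"
    proof
      fix x assume x: "x \<in> L"
      then have "x \<in> closure S" using LS closure_subset by blast
      moreover have "x \<notin> {x. p x = 1}" using x unfolding L_def by simp
      then have "x \<notin> frontier S" using F by simp
      ultimately show "x \<in> interior S" by (simp add: frontier_def)
    qed
    then have LI: "L = interior S" using intLS interior_subset by blast
    have "M = L \<union> {x. p x = 1}" unfolding M_def L_def by auto
    also have "\<dots> = closure S" using LI F interior_subset[of S] closure_subset[of S]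
      by (auto simp: frontier_def)
    finally have "M = closure S" .
    then show "continuous_on UNIV p" using cont_iff lsc1 lsc2 usc1 usc2 LI by auto
  qed
  show ?thesis
    using intLS intSM clLS clSM lsc1 lsc2 usc1 usc2 c2
    unfolding p_def L_def M_def by blast
qed

end
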